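(* Let $k\in I$ with $a_{kk}=0$ and $p(k)=1$. Define $r_k(\alpha_k)=-\alpha_k$; for $i\ne k$, $r_k(\alpha_i)=\alpha_i$ if $a_{ik}=a_{ki}=0$ and $r_k(\alpha_i)=\alpha_i+\alpha_k$ otherwise. Define $X'_k=Y_k$, $Y'_k=X_k$; for $i\neq k$ with $a_{ik}=a_{ki}=0$ put $X'_i=X_i$, $Y'_i=Y_i$; for $i\neq k$ with $a_{ik}\ne0$ or $a_{ki}\neq0$ put $X'_i=[X_i,X_k]$, $Y'_i=[Y_i,Y_k]$; and $h'_i=[X'_i,Y'_i]$. Then $r_k(\alpha_1),\dots,r_k(\alpha_n)$ are linearly independent, and for all $h\in\mathfrak h$ and $i,j\in I$: $[h,X'_i]=r_k(\alpha_i)(h)X'_i$, $[h,Y'_i]=-r_k(\alpha_i)(h)Y'_i$, $[X'_i,Y'_j]=\delta_{ij}h'_i$. Moreover, if $\alpha_k$ is regular (i.e. for every $j\neq k$, $a_{kj}=0$ implies $a_{jk}=0$), then $\mathfrak h$ together with $X'_1,\dots,X'_n,Y'_1,\dots,Y'_n$ generate $\mathfrak g(A)$.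
   Context: Let $I=\{1,\dots,n\}$, let $A=(a_{ij})_{i,j\in I}$ be a complex $n\times n$ matrix and $p:I\to\mathbb Z_2$ a parity function. Fix a complex vector space $\mathfrak h$ of dimension $n+\operatorname{corank}(A)$, linearly independent $\alpha_1,\dots,\alpha_n\in\mathfrak h^*$ and $h_1,\dots,h_n\in\mathfrak h$ with $\alpha_j(h_i)=a_{ij}$. Let $\bar{\mathfrak g}(A)$ be the Lie superalgebra generated by $\mathfrak h$ (even, abelian) and elements $X_i,Y_i$ ($i\in I$) of parity $p(i)$ subject to $[h,X_i]=\alpha_i(h)X_i$, $[h,Y_i]=-\alpha_i(h)Y_i$, $[X_i,Y_j]=\delta_{ij}h_i$. The contragredient Lie superalgebra $\mathfrak g(A)$ is the quotient of $\bar{\mathfrak g}(A)$ by the unique maximal ideal meeting $\mathfrak h$ trivially; we keep writing $X_i,Y_i,h_i$ for the images. *)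

theory Defs
  imports Complex_Main "HOL-Library.Function_Algebras"
begin

text \<open>Parities: \<open>False\<close> = even (0 in Z2), \<open>True\<close> = odd (1 in Z2).
  The homogeneous component of parity \<open>a\<close> is \<open>G0\<close> resp. \<open>G1\<close>.\<close>

definition par_part :: "'g set \<Rightarrow> 'g set \<Rightarrow> bool \<Rightarrow> 'g set" where
  "par_part G0 G1 a = (if a then G1 else G0)"

definition psign :: "bool \<Rightarrow> bool \<Rightarrow> complex" where
  "psign a b = (if a \<and> b then -1 else 1)"

definition lie_superalgebra ::
  "(complex \<Rightarrow> 'g::ab_group_add \<Rightarrow> 'g) \<Rightarrow> ('g \<Rightarrow> 'g \<Rightarrow> 'g) \<Rightarrow> 'g set \<Rightarrow> 'g set \<Rightarrow> bool" where
  "lie_superalgebra scale br G0 G1 \<longleftrightarrow>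
     vector_space scale \<and>
     (\<forall>x y z. br (x + y) z = br x z + br y z) \<and>
     (\<forall>x y z. br x (y + z) = br x y + br x z) \<and>
     (\<forall>c x y. br (scale c x) y = scale c (br x y)) \<and>
     (\<forall>c x y. br x (scale c y) = scale c (br x y)) \<and>
     module.subspace scale G0 \<and> module.subspace scale G1 \<and>
     G0 \<inter> G1 = {0} \<and> (\<forall>x. \<exists>u\<in>G0. \<exists>v\<in>G1. x = u + v) \<and>
     (\<forall>a b x y. x \<in> par_part G0 G1 a \<longrightarrow> y \<in> par_part G0 G1 b \<longrightarrow>
        br x y \<in> par_part G0 G1 (a \<noteq> b)) \<and>
     (\<forall>a b x y. x \<in> par_part G0 G1 a \<longrightarrow> y \<in> par_part G0 G1 b \<longrightarrow>
        br x y = - scale (psign a b) (br y x)) \<and>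
     (\<forall>a b x y z. x \<in> par_part G0 G1 a \<longrightarrow> y \<in> par_part G0 G1 b \<longrightarrow>
        br x (br y z) = br (br x y) z + scale (psign a b) (br y (br x z)))"

definition lie_generated ::
  "(complex \<Rightarrow> 'g::ab_group_add \<Rightarrow> 'g) \<Rightarrow> ('g \<Rightarrow> 'g \<Rightarrow> 'g) \<Rightarrow> 'g set \<Rightarrow> 'g set" where
  "lie_generated scale br S =
     \<Inter>{L. module.subspace scale L \<and> S \<subseteq> L \<and> (\<forall>x\<in>L. \<forall>y\<in>L. br x y \<in> L)}"

definition lie_ideal ::
  "(complex \<Rightarrow> 'g::ab_group_add \<Rightarrow> 'g) \<Rightarrow> ('g \<Rightarrow> 'g \<Rightarrow> 'g) \<Rightarrow> 'g set \<Rightarrow> bool" where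
  "lie_ideal scale br J \<longleftrightarrow> module.subspace scale J \<and> (\<forall>x. \<forall>y\<in>J. br x y \<in> J)"

definition corank :: "nat \<Rightarrow> (nat \<Rightarrow> nat \<Rightarrow> complex) \<Rightarrow> nat" where
  "corank n A = vector_space.dim (\<lambda>c (v::nat \<Rightarrow> complex) i. c * v i)
     {v. (\<forall>i. i \<notin> {1..n} \<longrightarrow> v i = 0) \<and> (\<forall>i\<in>{1..n}. (\<Sum>j=1..n. A i j * v j) = 0)}"

text \<open>A function \<open>'g \<Rightarrow> complex\<close> which is linear on the subspace \<open>H\<close>
  (an element of \<open>H\<^sup>*\<close>; only its values on \<open>H\<close> matter).\<close>
definition linear_on ::
  "(complex \<Rightarrow> 'g::ab_group_add \<Rightarrow> 'g) \<Rightarrow> 'g set \<Rightarrow> ('g \<Rightarrow> complex) \<Rightarrow> bool" where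
  "linear_on scale H f \<longleftrightarrow>
     (\<forall>x\<in>H. \<forall>y\<in>H. f (x + y) = f x + f y) \<and> (\<forall>c. \<forall>x\<in>H. f (scale c x) = c * f x)"

definition lin_indep_on :: "'g set \<Rightarrow> nat \<Rightarrow> (nat \<Rightarrow> 'g \<Rightarrow> complex) \<Rightarrow> bool" where
  "lin_indep_on H n f \<longleftrightarrow>
     (\<forall>c. (\<forall>x\<in>H. (\<Sum>i=1..n. c i * f i x) = 0) \<longrightarrow> (\<forall>i\<in>{1..n}. c i = 0))"

definition odd_refl_root ::
  "(nat \<Rightarrow> nat \<Rightarrow> complex) \<Rightarrow> (nat \<Rightarrow> 'g \<Rightarrow> complex) \<Rightarrow> nat \<Rightarrow> nat \<Rightarrow> 'g \<Rightarrow> complex" where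
  "odd_refl_root A \<alpha> k i = (\<lambda>h. if i = k then - \<alpha> k h
      else if A i k = 0 \<and> A k i = 0 then \<alpha> i h else \<alpha> i h + \<alpha> k h)"

definition odd_refl_X ::
  "('g \<Rightarrow> 'g \<Rightarrow> 'g) \<Rightarrow> (nat \<Rightarrow> nat \<Rightarrow> complex) \<Rightarrow> (nat \<Rightarrow> 'g) \<Rightarrow> (nat \<Rightarrow> 'g) \<Rightarrow> nat \<Rightarrow> nat \<Rightarrow> 'g" where
  "odd_refl_X br A X Y k i = (if i = k then Y k
      else if A i k = 0 \<and> A k i = 0 then X i else br (X i) (X k))"

definition odd_refl_Y ::
  "('g \<Rightarrow> 'g \<Rightarrow> 'g) \<Rightarrow> (nat \<Rightarrow> nat \<Rightarrow> complex) \<Rightarrow> (nat \<Rightarrow> 'g) \<Rightarrow> (nat \<Rightarrow> 'g) \<Rightarrow> nat \<Rightarrow> nat \<Rightarrow> 'g" where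
  "odd_refl_Y br A X Y k i = (if i = k then X k
      else if A i k = 0 \<and> A k i = 0 then Y i else br (Y i) (Y k))"

definition odd_refl_h ::
  "('g \<Rightarrow> 'g \<Rightarrow> 'g) \<Rightarrow> (nat \<Rightarrow> nat \<Rightarrow> complex) \<Rightarrow> (nat \<Rightarrow> 'g) \<Rightarrow> (nat \<Rightarrow> 'g) \<Rightarrow> nat \<Rightarrow> nat \<Rightarrow> 'g" where
  "odd_refl_h br A X Y k i = br (odd_refl_X br A X Y k i) (odd_refl_Y br A X Y k i)"

definition regular_root :: "nat \<Rightarrow> (nat \<Rightarrow> nat \<Rightarrow> complex) \<Rightarrow> nat \<Rightarrow> bool" where
  "regular_root n A k \<longleftrightarrow> (\<forall>j\<in>{1..n}. j \<noteq> k \<longrightarrow> A k j = 0 \<longrightarrow> A j k = 0)"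

end

theory Submission
  imports Defs
begin


locale LS =
  fixes scale :: "complex \<Rightarrow> 'g::ab_group_add \<Rightarrow> 'g"
    and br :: "'g \<Rightarrow> 'g \<Rightarrow> 'g"
    and G0 G1 :: "'g set"
  assumes lsa: "lie_superalgebra scale br G0 G1"
begin

lemma vs: "vector_space scale" using lsa unfolding lie_superalgebra_def by (elim conjE) meson

sublocale vector_space scale by (rule vs)

abbreviation par where "par a \<equiv> par_part G0 G1 a"

lemma br_addL: "br (x + y) z = br x z + br y z"
  using lsa unfolding lie_superalgebra_def by (elim conjE) meson
lemma br_addR: "br x (y + z) = br x y + br x z"
  using lsa unfolding lie_superalgebra_def by (elim conjE) meson
lemma br_scaleL: "br (scale c x) y = scale c (br x y)"
  using lsa unfolding lie_superalgebra_def by (elim conjE) meson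
lemma br_scaleR: "br x (scale c y) = scale c (br x y)"
  using lsa unfolding lie_superalgebra_def by (elim conjE) meson
lemma sub0: "subspace G0" using lsa unfolding lie_superalgebra_def by (elim conjE) meson
lemma sub1: "subspace G1" using lsa unfolding lie_superalgebra_def by (elim conjE) meson
lemma G01: "G0 \<inter> G1 = {0}" using lsa unfolding lie_superalgebra_def by (elim conjE) meson
lemma decomp: "\<exists>u\<in>G0. \<exists>v\<in>G1. x = u + v" using lsa unfolding lie_superalgebra_def by (elim conjE) meson
lemma br_par: "x \<in> par a \<Longrightarrow> y \<in> par b \<Longrightarrow> br x y \<in> par (a \<noteq> b)"
  using lsa unfolding lie_superalgebra_def by (elim conjE) meson
lemma antisym: "x \<in> par a \<Longrightarrow> y \<in> par b \<Longrightarrow> br x y = - scale (psign a b) (br y x)"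
  using lsa unfolding lie_superalgebra_def by (elim conjE) meson
lemma jacobi: "x \<in> par a \<Longrightarrow> y \<in> par b \<Longrightarrow>
   br x (br y z) = br (br x y) z + scale (psign a b) (br y (br x z))"
  using lsa unfolding lie_superalgebra_def by (elim conjE) meson

lemma br_0L[simp]: "br 0 y = 0"
proof -
  have "br (0+0) y = br 0 y + br 0 y" by (rule br_addL)
  thus ?thesis by simp
qed
lemma br_0R[simp]: "br y 0 = 0"
proof -
  have "br y (0+0) = br y 0 + br y 0" by (rule br_addR)
  thus ?thesis by simp
qed
lemma br_negL: "br (- x) y = - br x y"
  by (metis br_scaleL scale_minus_left scale_one)
lemma br_negR: "br y (- x) = - br y x"
  by (metis br_scaleR scale_minus_left scale_one)
lemma br_diffL: "br (x - y) z = br x z - br y z"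
  by (simp only: diff_conv_add_uminus br_addL br_negL)
lemma br_diffR: "br z (x - y) = br z x - br z y"
  by (simp only: diff_conv_add_uminus br_addR br_negR)
lemma br_sum_listR: "br h (sum_list ws) = sum_list (map (br h) ws)"
  by (induction ws) (simp_all add: br_addR)

lemma psign_simps[simp]: "psign a False = 1" "psign False b = 1" "psign True True = -1"
  by (auto simp: psign_def)
lemma par_simps[simp]: "par False = G0" "par True = G1"
  by (auto simp: par_part_def)

lemma half_zero: "w = - w \<Longrightarrow> w = (0::'g)"
proof -
  assume "w = - w"
  hence "w + w = 0" by (metis add.right_inverse)
  hence "scale 2 w = 0" by (metis one_add_one scale_left_distrib scale_one)
  hence "scale (1/2) (scale 2 w) = 0" by simp
  thus ?thesis by simp
qed

lemma odd_sq: "x \<in> G1 \<Longrightarrow> br x x = 0 \<Longrightarrow> br x (br x z) = 0"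
proof -
  assume x: "x \<in> G1" "br x x = 0"
  have "br x (br x z) = br (br x x) z + scale (psign True True) (br x (br x z))"
    using jacobi[of x True x True z] x by simp
  hence "br x (br x z) = - br x (br x z)" using x by simp
  thus ?thesis by (rule half_zero)
qed

definition lie_closed where "lie_closed L \<longleftrightarrow> subspace L \<and> (\<forall>x\<in>L. \<forall>y\<in>L. br x y \<in> L)"

lemma lg_min: "S \<subseteq> L \<Longrightarrow> lie_closed L \<Longrightarrow> lie_generated scale br S \<subseteq> L"
  unfolding lie_generated_def lie_closed_def by blast

lemma lg_closed: "lie_closed (lie_generated scale br S)"
  unfolding lie_generated_def lie_closed_def
  by (auto simp: subspace_def)

lemma lg_sup: "S \<subseteq> lie_generated scale br S"
  unfolding lie_generated_def by blast

lemma ideal_crit: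
  assumes J: "subspace J"
    and Shom: "\<forall>s\<in>S. \<exists>a. s \<in> par a"
    and SJ: "\<forall>s\<in>S. \<forall>y\<in>J. br s y \<in> J"
    and gen: "lie_generated scale br S = UNIV"
  shows "lie_ideal scale br J"
proof -
  define L where "L = {x. \<forall>u\<in>G0. \<forall>w\<in>G1. x = u + w \<longrightarrow> (\<forall>y\<in>J. br u y \<in> J \<and> br w y \<in> J)}"
  have uniq: "u = u' \<and> w = w'" if "u \<in> G0" "u' \<in> G0" "w \<in> G1" "w' \<in> G1" "u + w = u' + w'" for u u' w w'
  proof -
    have "u - u' = w' - w" using that(5) by (simp add: algebra_simps)
    moreover have "u - u' \<in> G0" using sub0 that by (simp add: subspace_diff)
    moreover have "w' - w \<in> G1" using sub1 that by (simp add: subspace_diff)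
    ultimately have "u - u' = 0" "w' - w = 0" using G01 by (metis IntI singletonD)+
    thus ?thesis by simp
  qed
  have homL: "br x y \<in> J" if "x \<in> par a" "(\<forall>y\<in>J. br x y \<in> J)" "y \<in> J" for x a y
    using that by simp
  define good where "good x \<longleftrightarrow> (\<forall>y\<in>J. br x y \<in> J)" for x
  have good_br: "good (br x y)" if "x \<in> par a" "y \<in> par b" "good x" "good y" for x y a b
    unfolding good_def
  proof
    fix z assume z: "z \<in> J"
    have "br x (br y z) = br (br x y) z + scale (psign a b) (br y (br x z))"
      by (rule jacobi[OF that(1,2)])
    hence e: "br (br x y) z = br x (br y z) - scale (psign a b) (br y (br x z))"
      by (simp add: algebra_simps)
    show "br (br x y) z \<in> J" unfolding e
      using that z J unfolding good_def
      by (intro subspace_diff subspace_scale) auto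
  qed
  have good_add: "good (x + y)" if "good x" "good y" for x y
    using that J unfolding good_def by (auto simp: br_addL intro: subspace_add)
  have good_scale: "good (scale c x)" if "good x" for x c
    using that J unfolding good_def by (auto simp: br_scaleL intro: subspace_scale)
  have good0: "good 0" using J unfolding good_def by (simp add: subspace_0)
  have Lchar: "x \<in> L \<longleftrightarrow> (\<exists>u\<in>G0. \<exists>w\<in>G1. x = u + w \<and> good u \<and> good w)" for x
  proof
    assume "x \<in> L" thus "\<exists>u\<in>G0. \<exists>w\<in>G1. x = u + w \<and> good u \<and> good w"
      using decomp[of x] unfolding L_def good_def by blast
  next
    assume "\<exists>u\<in>G0. \<exists>w\<in>G1. x = u + w \<and> good u \<and> good w"
    then obtain u w where uw: "u \<in> G0" "w \<in> G1" "x = u + w" "good u" "good w" by blast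
    show "x \<in> L" unfolding L_def
    proof (intro CollectI ballI impI)
      fix u' w' y assume "u' \<in> G0" "w' \<in> G1" "x = u' + w'" "y \<in> J"
      hence "u = u' \<and> w = w'" using uniq uw by metis
      thus "br u' y \<in> J \<and> br w' y \<in> J" using uw \<open>y \<in> J\<close> unfolding good_def by blast
    qed
  qed
  have "lie_closed L" unfolding lie_closed_def
  proof (intro conjI ballI)
    show "subspace L" unfolding subspace_def
    proof (intro conjI ballI allI)
      show "0 \<in> L" unfolding Lchar using good0 sub0 sub1 by (metis add_0 subspace_0)
      fix x y assume "x \<in> L" "y \<in> L"
      then obtain u w u' w' where "u \<in> G0" "w \<in> G1" "x = u + w" "good u" "good w"
        "u' \<in> G0" "w' \<in> G1" "y = u' + w'" "good u'" "good w'" unfolding Lchar by blast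
      thus "x + y \<in> L" unfolding Lchar
        by (intro bexI[of _ "u+u'"] bexI[of _ "w+w'"])
           (auto simp: algebra_simps good_add sub0 sub1 subspace_add)
    next
      fix c x assume "x \<in> L"
      then obtain u w where "u \<in> G0" "w \<in> G1" "x = u + w" "good u" "good w" unfolding Lchar by blast
      thus "scale c x \<in> L" unfolding Lchar
        by (intro bexI[of _ "scale c u"] bexI[of _ "scale c w"])
           (auto simp: algebra_simps good_scale sub0 sub1 subspace_scale)
    qed
  next
    fix x y assume "x \<in> L" "y \<in> L"
    then obtain u w u' w' where h: "u \<in> G0" "w \<in> G1" "x = u + w" "good u" "good w"
        "u' \<in> G0" "w' \<in> G1" "y = u' + w'" "good u'" "good w'" unfolding Lchar by blast
    have p1: "br u u' \<in> G0" using br_par[of u False u' False] h by simp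
    have p2: "br w w' \<in> G0" using br_par[of w True w' True] h by simp
    have p3: "br u w' \<in> G1" using br_par[of u False w' True] h by simp
    have p4: "br w u' \<in> G1" using br_par[of w True u' False] h by simp
    have g: "good (br u u')" "good (br w w')" "good (br u w')" "good (br w u')"
      using good_br[of u False u' False] good_br[of w True w' True]
        good_br[of u False w' True] good_br[of w True u' False] h by auto
    have "br x y = (br u u' + br w w') + (br u w' + br w u')"
      using h by (simp add: br_addL br_addR algebra_simps)
    thus "br x y \<in> L" unfolding Lchar using p1 p2 p3 p4 g
      by (intro bexI[of _ "br u u' + br w w'"] bexI[of _ "br u w' + br w u'"])
         (auto simp: good_add sub0 sub1 subspace_add)
  qed
  moreover have "S \<subseteq> L"
  proof
    fix s assume s: "s \<in> S"
    then obtain a where a: "s \<in> par a" using Shom by blast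
    have gs: "good s" using SJ s unfolding good_def by blast
    show "s \<in> L" unfolding Lchar
    proof (cases a)
      case True thus "\<exists>u\<in>G0. \<exists>w\<in>G1. s = u + w \<and> good u \<and> good w"
        using a gs good0 sub0 by (intro bexI[of _ 0] bexI[of _ s]) (auto simp: subspace_0)
    next
      case False thus "\<exists>u\<in>G0. \<exists>w\<in>G1. s = u + w \<and> good u \<and> good w"
        using a gs good0 sub1 by (intro bexI[of _ s] bexI[of _ 0]) (auto simp: subspace_0)
    qed
  qed
  ultimately have "UNIV \<subseteq> L" using lg_min gen by metis
  hence "x \<in> L" for x by blast
  have "br x y \<in> J" if "y \<in> J" for x y
  proof -
    obtain u w where uw: "u \<in> G0" "w \<in> G1" "x = u + w" "good u" "good w"
      using \<open>\<And>x. x \<in> L\<close>[of x] unfolding Lchar by blast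
    have "br u y \<in> J" "br w y \<in> J" using uw(4,5) that unfolding good_def by auto
    thus ?thesis unfolding uw(3) br_addL using J by (simp add: subspace_add)
  qed
  hence "\<forall>x. \<forall>y\<in>J. br x y \<in> J" by blast
  with J show ?thesis unfolding lie_ideal_def by (rule conjI)
qed

end


locale CG = LS scale br G0 G1
  for scale :: "complex \<Rightarrow> 'g::ab_group_add \<Rightarrow> 'g" and br G0 G1 +
  fixes H :: "'g set" and n k :: nat and A :: "nat \<Rightarrow> nat \<Rightarrow> complex" and p :: "nat \<Rightarrow> bool"
    and \<alpha> :: "nat \<Rightarrow> 'g \<Rightarrow> complex" and hh X Y :: "nat \<Rightarrow> 'g"
  assumes H_sub: "module.subspace scale H"
    and H_even: "H \<subseteq> G0"
    and H_abel: "\<forall>x\<in>H. \<forall>y\<in>H. br x y = 0"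
    and \<alpha>_indep: "lin_indep_on H n \<alpha>"
    and hh_in: "\<forall>i\<in>{1..n}. hh i \<in> H"
    and hh_val: "\<forall>i\<in>{1..n}. \<forall>j\<in>{1..n}. \<alpha> j (hh i) = A i j"
    and X_par: "\<forall>i\<in>{1..n}. X i \<in> par_part G0 G1 (p i)"
    and Y_par: "\<forall>i\<in>{1..n}. Y i \<in> par_part G0 G1 (p i)"
    and rel_X: "\<forall>h\<in>H. \<forall>i\<in>{1..n}. br h (X i) = scale (\<alpha> i h) (X i)"
    and rel_Y: "\<forall>h\<in>H. \<forall>i\<in>{1..n}. br h (Y i) = scale (- \<alpha> i h) (Y i)"
    and rel_XY: "\<forall>i\<in>{1..n}. \<forall>j\<in>{1..n}. br (X i) (Y j) = (if i = j then hh i else 0)"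
    and gen: "lie_generated scale br (H \<union> X ` {1..n} \<union> Y ` {1..n}) = UNIV"
    and maximal: "\<forall>J. lie_ideal scale br J \<and> J \<inter> H = {0} \<longrightarrow> J = {0}"
    and k_in: "k \<in> {1..n}"
begin

lemma H_par: "h \<in> H \<Longrightarrow> h \<in> par False" using H_even by auto

inductive_set orb :: "(nat \<Rightarrow> 'g) \<Rightarrow> 'g \<Rightarrow> 'g set" for Z v where
  base: "v \<in> orb Z v"
| step: "u \<in> orb Z v \<Longrightarrow> i \<in> {1..n} \<Longrightarrow> br (Z i) u \<in> orb Z v"

lemma br_span: "(\<And>u. u \<in> S \<Longrightarrow> br g u \<in> span S) \<Longrightarrow> x \<in> span S \<Longrightarrow> br g x \<in> span S"
proof -
  assume a: "\<And>u. u \<in> S \<Longrightarrow> br g u \<in> span S" and x: "x \<in> span S"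
  from x show ?thesis
  proof (induction rule: span_induct_alt)
    case base thus ?case by (simp add: span_zero)
  next
    case (step c u y) thus ?case
      using a by (simp add: br_addR br_scaleR span_add span_scale)
  qed
qed

definition Wset where
  "Wset = {w. \<exists>\<beta>. (\<forall>h\<in>H. br h w = scale (\<beta> h) w) \<and> (\<exists>h\<in>H. \<beta> h \<noteq> 0)}"

lemma Wset_scale: "w \<in> Wset \<Longrightarrow> scale c w \<in> Wset"
  unfolding Wset_def by (auto simp: br_scaleR scale_left_commute)

lemma span_list: "x \<in> span S \<Longrightarrow> S \<subseteq> Wset \<Longrightarrow> \<exists>ws. set ws \<subseteq> Wset \<and> x = sum_list ws"
proof (induction rule: span_induct_alt)
  case base thus ?case by (intro exI[of _ "[]"]) simp
next
  case (step c u y)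
  then obtain ws where "set ws \<subseteq> Wset" "y = sum_list ws" by blast
  thus ?case using step Wset_scale
    by (intro exI[of _ "scale c u # ws"]) auto
qed

lemma wt_list_aux: "length ws = m \<Longrightarrow> set ws \<subseteq> Wset \<Longrightarrow> x \<in> H \<Longrightarrow> x = sum_list ws \<Longrightarrow> x = 0"
proof (induction m arbitrary: ws x)
  case 0 thus ?case by simp
next
  case (Suc m)
  then obtain w ws' where wsd: "ws = w # ws'" by (cases ws) auto
  from Suc.prems(2) wsd have "w \<in> Wset" by simp
  then obtain \<beta> h0 where wb: "\<forall>h\<in>H. br h w = scale (\<beta> h) w" and h0: "h0 \<in> H" "\<beta> h0 \<noteq> 0"
    unfolding Wset_def by blast
  define c where "c = \<beta> h0"
  define T where "T y = br h0 y - scale c y" for y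
  have Tsum: "sum_list (map T ws) = T (sum_list ws)" for ws
    by (induction ws) (simp_all add: T_def br_addR scale_right_distrib algebra_simps)
  have Tw: "T w = 0" using wb h0 by (simp add: T_def c_def)
  have Tx: "T x = - scale c x" using H_abel h0 Suc.prems(3) by (simp add: T_def)
  have TW: "T y \<in> Wset" if "y \<in> Wset" for y
  proof -
    from that obtain \<gamma> where g: "\<forall>h\<in>H. br h y = scale (\<gamma> h) y" by (auto simp: Wset_def)
    have "T y = scale (\<gamma> h0 - c) y" using g h0 by (simp add: T_def scale_left_diff_distrib)
    thus ?thesis using Wset_scale that by simp
  qed
  have "T x = T w + T (sum_list ws')"
    using Suc.prems(4) wsd by (simp add: T_def br_addR scale_right_distrib algebra_simps)
  hence e: "- scale c x = sum_list (map T ws')" using Tw Tx Tsum by simp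
  have "- scale c x \<in> H" using H_sub Suc.prems(3) by (simp add: subspace_neg subspace_scale)
  moreover have "set (map T ws') \<subseteq> Wset" using Suc.prems(2) wsd TW by auto
  moreover have "length (map T ws') = m" using Suc.prems(1) wsd by simp
  ultimately have "- scale c x = 0" using Suc.IH e by blast
  hence "scale (inverse c) (scale c x) = 0" by simp
  moreover have "scale (inverse c) (scale c x) = x" using h0 c_def by simp
  ultimately show "x = 0" by metis
qed

lemma wt_list: "set ws \<subseteq> Wset \<Longrightarrow> x \<in> H \<Longrightarrow> x = sum_list ws \<Longrightarrow> x = 0"
  using wt_list_aux by blast

lemma nonzero_wt:
  assumes "d k \<ge> (1::nat)"
  shows "\<exists>h\<in>H. (\<Sum>i\<in>{1..n}. of_nat (d i) * \<alpha> i h) \<noteq> 0"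
proof (rule ccontr)
  assume "\<not> ?thesis"
  hence "\<forall>x\<in>H. (\<Sum>i=1..n. of_nat (d i) * \<alpha> i x) = 0" by simp
  hence "\<forall>i\<in>{1..n}. (of_nat (d i)::complex) = 0"
    using \<alpha>_indep[unfolded lin_indep_on_def, rule_format, of "\<lambda>i. of_nat (d i)"] by simp
  hence "d k = 0" using k_in by simp
  thus False using assms by simp
qed

lemma kill:
  fixes Z W :: "nat \<Rightarrow> 'g" and \<sigma> :: complex and v :: 'g and c :: "nat \<Rightarrow> nat"
  assumes \<sigma>: "\<sigma> \<noteq> 0"
    and Zhom: "\<forall>i\<in>{1..n}. \<exists>a. Z i \<in> par a"
    and Whom: "\<forall>i\<in>{1..n}. \<exists>a. W i \<in> par a"
    and Zwt: "\<forall>h\<in>H. \<forall>i\<in>{1..n}. br h (Z i) = scale (\<sigma> * \<alpha> i h) (Z i)"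
    and WZ: "\<forall>i\<in>{1..n}. \<forall>j\<in>{1..n}. br (W i) (Z j) \<in> H"
    and gen': "lie_generated scale br (H \<union> Z ` {1..n} \<union> W ` {1..n}) = UNIV"
    and vwt: "\<forall>h\<in>H. br h v = scale (\<sigma> * (\<Sum>i\<in>{1..n}. of_nat (c i) * \<alpha> i h)) v"
    and ck: "c k \<ge> 1"
    and Wv: "\<forall>i\<in>{1..n}. br (W i) v = 0"
  shows "v = 0"
proof -
  define Ob where "Ob = orb Z v"
  have Owt: "\<exists>d. d k \<ge> (1::nat) \<and> (\<forall>h\<in>H. br h u = scale (\<sigma> * (\<Sum>i\<in>{1..n}. of_nat (d i) * \<alpha> i h)) u)"
    if "u \<in> Ob" for u
    using that unfolding Ob_def
  proof (induction rule: orb.induct)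
    case base thus ?case using vwt ck by blast
  next
    case (step u i)
    then obtain d where d: "d k \<ge> 1" "\<forall>h\<in>H. br h u = scale (\<sigma> * (\<Sum>i\<in>{1..n}. of_nat (d i) * \<alpha> i h)) u"
      by blast
    have i_in: "i \<in> {1..n}" using step.hyps by blast
    define d' where "d' j = d j + (if j = i then 1 else 0)" for j
    obtain a where a: "Z i \<in> par a" using Zhom i_in by blast
    have "br h (br (Z i) u) = scale (\<sigma> * (\<Sum>j\<in>{1..n}. of_nat (d' j) * \<alpha> j h)) (br (Z i) u)"
      if h: "h \<in> H" for h
    proof -
      have "br h (br (Z i) u) = br (br h (Z i)) u + br (Z i) (br h u)"
        using jacobi[OF H_par[OF h] a, of u] by simp
      also have "\<dots> = scale (\<sigma> * \<alpha> i h) (br (Z i) u)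
          + scale (\<sigma> * (\<Sum>j\<in>{1..n}. of_nat (d j) * \<alpha> j h)) (br (Z i) u)"
        using Zwt d(2) h i_in by (simp add: br_scaleL br_scaleR)
      also have "\<dots> = scale (\<sigma> * \<alpha> i h + \<sigma> * (\<Sum>j\<in>{1..n}. of_nat (d j) * \<alpha> j h)) (br (Z i) u)"
        by (simp add: scale_left_distrib)
      also have "\<sigma> * \<alpha> i h + \<sigma> * (\<Sum>j\<in>{1..n}. of_nat (d j) * \<alpha> j h)
          = \<sigma> * (\<Sum>j\<in>{1..n}. of_nat (d' j) * \<alpha> j h)"
      proof -
        have "(\<Sum>j\<in>{1..n}. of_nat (d' j) * \<alpha> j h)
            = (\<Sum>j\<in>{1..n}. of_nat (d j) * \<alpha> j h) + (\<Sum>j\<in>{1..n}. (if j = i then \<alpha> j h else 0))"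
        proof -
          have "(\<Sum>j\<in>{1..n}. of_nat (d' j) * \<alpha> j h)
              = (\<Sum>j\<in>{1..n}. of_nat (d j) * \<alpha> j h + (if j = i then \<alpha> j h else 0))"
            by (rule sum.cong) (auto simp: d'_def algebra_simps)
          thus ?thesis by (simp only: sum.distrib)
        qed
        also have "(\<Sum>j\<in>{1..n}. (if j = i then \<alpha> j h else 0)) = \<alpha> i h"
          using i_in by simp
        finally show ?thesis by (simp add: algebra_simps)
      qed
      finally show ?thesis .
    qed
    moreover have "d' k \<ge> 1" using d(1) by (simp add: d'_def)
    ultimately show ?case by blast
  qed
  have OW: "Ob \<subseteq> Wset"
  proof
    fix u assume "u \<in> Ob"
    then obtain d where d: "d k \<ge> (1::nat)" "\<forall>h\<in>H. br h u = scale (\<sigma> * (\<Sum>i\<in>{1..n}. of_nat (d i) * \<alpha> i h)) u"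
      using Owt by blast
    obtain h where "h \<in> H" "(\<Sum>i\<in>{1..n}. of_nat (d i) * \<alpha> i h) \<noteq> 0" using nonzero_wt[of d, OF d(1)] by blast
    thus "u \<in> Wset" unfolding Wset_def using d(2) \<sigma>
      by (intro CollectI exI[of _ "\<lambda>h. \<sigma> * (\<Sum>i\<in>{1..n}. of_nat (d i) * \<alpha> i h)"]) auto
  qed
  define J where "J = span Ob"
  have HJ: "br h x \<in> J" if "h \<in> H" "x \<in> J" for h x
    using that(2) unfolding J_def
  proof (rule br_span[rotated])
    fix u assume "u \<in> Ob"
    then obtain d where "\<forall>h\<in>H. br h u = scale (\<sigma> * (\<Sum>i\<in>{1..n}. of_nat (d i) * \<alpha> i h)) u"
      using Owt by blast
    thus "br h u \<in> span Ob" using that(1) \<open>u \<in> Ob\<close> by (simp add: span_scale span_base)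
  qed
  have ZJ: "br (Z i) x \<in> J" if "i \<in> {1..n}" "x \<in> J" for i x
    using that(2) unfolding J_def
    by (rule br_span[rotated]) (use that(1) in \<open>auto simp: Ob_def intro!: span_base orb.step\<close>)
  have WO: "br (W i) u \<in> J" if i_in0: "i \<in> {1..n}" and u0: "u \<in> Ob" for i u
    using u0 unfolding Ob_def
  proof (induction rule: orb.induct)
    case base
    have "br (W i) v = 0" using Wv i_in0 by blast
    thus ?case by (simp add: J_def span_zero)
  next
    case (step u j)
    have j_in: "j \<in> {1..n}" and u_in: "u \<in> orb Z v" using step.hyps by blast+
    have IH: "br (W i) u \<in> J" by (rule step.IH)
    obtain a where a: "W i \<in> par a" using Whom i_in0 by blast
    obtain b where b: "Z j \<in> par b" using Zhom j_in by blast
    have e: "br (W i) (br (Z j) u) = br (br (W i) (Z j)) u + scale (psign a b) (br (Z j) (br (W i) u))"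
      by (rule jacobi[OF a b])
    have hin: "br (W i) (Z j) \<in> H" using WZ i_in0 j_in by blast
    have uJ: "u \<in> J" unfolding J_def Ob_def by (rule span_base) (rule u_in)
    have "br (br (W i) (Z j)) u \<in> J" by (rule HJ[OF hin uJ])
    moreover have "br (Z j) (br (W i) u) \<in> J" by (rule ZJ[OF j_in IH])
    ultimately show ?case unfolding e J_def by (intro span_add span_scale)
  qed
  have WJ: "br (W i) x \<in> J" if "i \<in> {1..n}" "x \<in> J" for i x
    using that(2) unfolding J_def
    by (rule br_span[rotated]) (use WO that(1) in \<open>auto simp: J_def\<close>)
  have ideal: "lie_ideal scale br J"
  proof (rule ideal_crit[OF _ _ _ gen'])
    show "subspace J" unfolding J_def by simp
    show "\<forall>s\<in>H \<union> Z ` {1..n} \<union> W ` {1..n}. \<exists>a. s \<in> par a"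
      using Zhom Whom H_par by blast
    show "\<forall>s\<in>H \<union> Z ` {1..n} \<union> W ` {1..n}. \<forall>y\<in>J. br s y \<in> J"
      using HJ ZJ WJ by blast
  qed
  have "J \<inter> H = {0}"
  proof (intro equalityI subsetI)
    fix x assume "x \<in> J \<inter> H"
    then obtain ws where "set ws \<subseteq> Wset" "x = sum_list ws" using span_list OW unfolding J_def by blast
    thus "x \<in> {0}" using wt_list \<open>x \<in> J \<inter> H\<close> by blast
  next
    fix x :: 'g assume "x \<in> {0}" thus "x \<in> J \<inter> H" using H_sub by (simp add: J_def span_zero subspace_0)
  qed
  hence "J = {0}" using maximal ideal by blast
  moreover have "v \<in> J" unfolding J_def Ob_def by (rule span_base) (rule orb.base)
  ultimately show ?thesis by blast
qed

end


locale CGk = CG +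
  assumes akk: "A k k = 0" and pk: "p k"
begin

abbreviation "I \<equiv> {1..n}"

lemma Xpar: "i \<in> I \<Longrightarrow> X i \<in> par (p i)" using X_par by blast
lemma Ypar: "i \<in> I \<Longrightarrow> Y i \<in> par (p i)" using Y_par by blast
lemma Xk1: "X k \<in> par True" using Xpar[OF k_in] pk by simp
lemma Yk1: "Y k \<in> par True" using Ypar[OF k_in] pk by simp
lemma hpar: "i \<in> I \<Longrightarrow> hh i \<in> par False" using hh_in H_par by blast

lemma XY: "i \<in> I \<Longrightarrow> j \<in> I \<Longrightarrow> br (X i) (Y j) = (if i = j then hh i else 0)"
  using rel_XY by blast
lemma YX: "i \<in> I \<Longrightarrow> j \<in> I \<Longrightarrow> br (Y j) (X i) = (if i = j then - scale (psign (p i) (p i)) (hh i) else 0)"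
  using antisym[OF Ypar[of j] Xpar[of i]] XY[of i j] by auto
lemma hX: "i \<in> I \<Longrightarrow> j \<in> I \<Longrightarrow> br (hh j) (X i) = scale (A j i) (X i)"
  using rel_X hh_in hh_val by auto
lemma hY: "i \<in> I \<Longrightarrow> j \<in> I \<Longrightarrow> br (hh j) (Y i) = scale (- A j i) (Y i)"
  using rel_Y hh_in hh_val by auto
lemma Xh: "i \<in> I \<Longrightarrow> j \<in> I \<Longrightarrow> br (X i) (hh j) = - scale (A j i) (X i)"
  using antisym[OF Xpar[of i] hpar[of j]] hX[of i j] by simp
lemma Yh: "i \<in> I \<Longrightarrow> j \<in> I \<Longrightarrow> br (Y i) (hh j) = scale (A j i) (Y i)"
  using antisym[OF Ypar[of i] hpar[of j]] hY[of i j] by simp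

lemma wt_br: "h \<in> H \<Longrightarrow> x \<in> par a \<Longrightarrow> br h x = scale u x \<Longrightarrow> br h y = scale w y
   \<Longrightarrow> br h (br x y) = scale (u + w) (br x y)"
  using jacobi[OF H_par, of h x a y] by (simp add: br_scaleL br_scaleR scale_left_distrib)

lemma sum2: "i \<in> I \<Longrightarrow> j \<in> I \<Longrightarrow>
  (\<Sum>l\<in>I. of_nat ((if l = i then 1 else 0) + (if l = j then 1 else 0)) * \<alpha> l h) = \<alpha> i h + \<alpha> j h"
proof -
  assume a: "i \<in> I" "j \<in> I"
  have "(\<Sum>l\<in>I. of_nat ((if l = i then 1 else 0) + (if l = j then 1 else 0)) * \<alpha> l h)
     = (\<Sum>l\<in>I. (if l = i then \<alpha> l h else 0) + (if l = j then \<alpha> l h else 0))"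
    by (rule sum.cong) (auto simp: algebra_simps)
  also have "\<dots> = \<alpha> i h + \<alpha> j h" using a by (simp add: sum.distrib)
  finally show ?thesis .
qed

lemma gen_YX: "lie_generated scale br (H \<union> Y ` I \<union> X ` I) = UNIV"
  using gen by (simp add: Un_ac)

lemma kill_X:
  assumes vwt: "\<forall>h\<in>H. br h v = scale (1 * (\<Sum>i\<in>I. of_nat (c i) * \<alpha> i h)) v"
    and ck: "c k \<ge> 1" and Wv: "\<forall>i\<in>I. br (Y i) v = 0"
  shows "v = 0"
proof (rule kill[where Z = X and W = Y and \<sigma> = 1, OF _ _ _ _ _ gen vwt ck Wv])
  show "\<forall>i\<in>I. \<exists>a. X i \<in> par a" using Xpar by blast
  show "\<forall>i\<in>I. \<exists>a. Y i \<in> par a" using Ypar by blast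
  show "\<forall>h\<in>H. \<forall>i\<in>I. br h (X i) = scale (1 * \<alpha> i h) (X i)" using rel_X by simp
  show "\<forall>i\<in>I. \<forall>j\<in>I. br (Y i) (X j) \<in> H"
    using YX hh_in H_sub by (auto simp: subspace_0 subspace_neg subspace_scale)
qed simp

lemma kill_Y:
  assumes vwt: "\<forall>h\<in>H. br h v = scale (-1 * (\<Sum>i\<in>I. of_nat (c i) * \<alpha> i h)) v"
    and ck: "c k \<ge> 1" and Wv: "\<forall>i\<in>I. br (X i) v = 0"
  shows "v = 0"
proof (rule kill[where Z = Y and W = X and \<sigma> = "-1", OF _ _ _ _ _ gen_YX vwt ck Wv])
  show "\<forall>i\<in>I. \<exists>a. X i \<in> par a" using Xpar by blast
  show "\<forall>i\<in>I. \<exists>a. Y i \<in> par a" using Ypar by blast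
  show "\<forall>h\<in>H. \<forall>i\<in>I. br h (Y i) = scale (-1 * \<alpha> i h) (Y i)" using rel_Y by simp
  show "\<forall>i\<in>I. \<forall>j\<in>I. br (X i) (Y j) \<in> H"
    using XY hh_in H_sub by (auto simp: subspace_0)
qed simp

lemma wtX2: assumes "i \<in> I" "j \<in> I"
  shows "\<forall>h\<in>H. br h (br (X i) (X j)) = scale (1 * (\<Sum>l\<in>I. of_nat ((if l = i then 1 else 0) + (if l = j then 1 else 0)) * \<alpha> l h)) (br (X i) (X j))"
proof
  fix h assume h: "h \<in> H"
  show "br h (br (X i) (X j)) = scale (1 * (\<Sum>l\<in>I. of_nat ((if l = i then 1 else 0) + (if l = j then 1 else 0)) * \<alpha> l h)) (br (X i) (X j))"
    unfolding sum2[OF assms] mult_1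
    by (rule wt_br[OF h Xpar[OF assms(1)]]) (use rel_X h assms in auto)
qed

lemma wtY2: assumes "i \<in> I" "j \<in> I"
  shows "\<forall>h\<in>H. br h (br (Y i) (Y j)) = scale (-1 * (\<Sum>l\<in>I. of_nat ((if l = i then 1 else 0) + (if l = j then 1 else 0)) * \<alpha> l h)) (br (Y i) (Y j))"
proof
  fix h assume h: "h \<in> H"
  have "br h (br (Y i) (Y j)) = scale (- \<alpha> i h + - \<alpha> j h) (br (Y i) (Y j))"
    by (rule wt_br[OF h Ypar[OF assms(1)]]) (use rel_Y h assms in auto)
  thus "br h (br (Y i) (Y j)) = scale (-1 * (\<Sum>l\<in>I. of_nat ((if l = i then 1 else 0) + (if l = j then 1 else 0)) * \<alpha> l h)) (br (Y i) (Y j))"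
    unfolding sum2[OF assms] by (simp add: algebra_simps)
qed

lemma V3: assumes i: "i \<in> I" "i \<noteq> k" and un: "A i k = 0" "A k i = 0"
  shows "br (X i) (X k) = 0"
proof (rule kill_X[where c = "\<lambda>l. (if l = i then 1 else 0) + (if l = k then 1 else 0)"])
  show "\<forall>h\<in>H. br h (br (X i) (X k)) = scale (1 * (\<Sum>l\<in>I. of_nat ((if l = i then 1 else 0) + (if l = k then 1 else 0)) * \<alpha> l h)) (br (X i) (X k))"
    by (rule wtX2[OF i(1) k_in])
  show "\<forall>j\<in>I. br (Y j) (br (X i) (X k)) = 0"
  proof
    fix j assume j: "j \<in> I"
    show "br (Y j) (br (X i) (X k)) = 0"
      using jacobi[OF Ypar[OF j] Xpar[OF i(1)], of "X k"] YX[OF i(1) j] YX[OF k_in j] i j un k_in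
      by (auto simp: br_scaleL br_scaleR br_negL br_negR hX Xh)
  qed
qed (use i in auto)

lemma V4: assumes i: "i \<in> I" "i \<noteq> k" and un: "A i k = 0" "A k i = 0"
  shows "br (Y i) (Y k) = 0"
proof (rule kill_Y[where c = "\<lambda>l. (if l = i then 1 else 0) + (if l = k then 1 else 0)"])
  show "\<forall>h\<in>H. br h (br (Y i) (Y k)) = scale (-1 * (\<Sum>l\<in>I. of_nat ((if l = i then 1 else 0) + (if l = k then 1 else 0)) * \<alpha> l h)) (br (Y i) (Y k))"
    by (rule wtY2[OF i(1) k_in])
  show "\<forall>j\<in>I. br (X j) (br (Y i) (Y k)) = 0"
  proof
    fix j assume j: "j \<in> I"
    show "br (X j) (br (Y i) (Y k)) = 0"
      using jacobi[OF Xpar[OF j] Ypar[OF i(1)], of "Y k"] XY[OF j i(1)] XY[OF j k_in] i j un k_in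
      by (auto simp: br_scaleL br_scaleR br_negL br_negR hY Yh)
  qed
qed (use i in auto)

lemma V1: "br (X k) (X k) = 0"
proof (rule kill_X[where c = "\<lambda>l. (if l = k then 1 else 0) + (if l = k then 1 else 0)"])
  show "\<forall>h\<in>H. br h (br (X k) (X k)) = scale (1 * (\<Sum>l\<in>I. of_nat ((if l = k then 1 else 0) + (if l = k then 1 else 0)) * \<alpha> l h)) (br (X k) (X k))"
    by (rule wtX2[OF k_in k_in])
  show "\<forall>j\<in>I. br (Y j) (br (X k) (X k)) = 0"
  proof
    fix j assume j: "j \<in> I"
    show "br (Y j) (br (X k) (X k)) = 0"
      using jacobi[OF Ypar[OF j] Xpar[OF k_in], of "X k"] YX[OF k_in j] j akk k_in
      by (auto simp: br_scaleL br_scaleR br_negL br_negR hX Xh)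
  qed
qed auto

lemma V2: "br (Y k) (Y k) = 0"
proof (rule kill_Y[where c = "\<lambda>l. (if l = k then 1 else 0) + (if l = k then 1 else 0)"])
  show "\<forall>h\<in>H. br h (br (Y k) (Y k)) = scale (-1 * (\<Sum>l\<in>I. of_nat ((if l = k then 1 else 0) + (if l = k then 1 else 0)) * \<alpha> l h)) (br (Y k) (Y k))"
    by (rule wtY2[OF k_in k_in])
  show "\<forall>j\<in>I. br (X j) (br (Y k) (Y k)) = 0"
  proof
    fix j assume j: "j \<in> I"
    show "br (X j) (br (Y k) (Y k)) = 0"
      using jacobi[OF Xpar[OF j] Ypar[OF k_in], of "Y k"] XY[OF j k_in] j akk k_in
      by (auto simp: br_scaleL br_scaleR br_negL br_negR hY Yh)
  qed
qed auto

end


context CGk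
begin

abbreviation "Xp \<equiv> odd_refl_X br A X Y k"
abbreviation "Yp \<equiv> odd_refl_Y br A X Y k"
abbreviation "r \<equiv> odd_refl_root A \<alpha> k"

lemma P2: assumes h: "h \<in> H" and i: "i \<in> I" shows "br h (Xp i) = scale (r i h) (Xp i)"
proof -
  have "br h (br (X i) (X k)) = scale (\<alpha> i h + \<alpha> k h) (br (X i) (X k))"
    by (rule wt_br[OF h Xpar[OF i]]) (use rel_X h i k_in in auto)
  thus ?thesis using rel_X rel_Y h i k_in by (auto simp: odd_refl_X_def odd_refl_root_def)
qed

lemma P3: assumes h: "h \<in> H" and i: "i \<in> I" shows "br h (Yp i) = scale (- r i h) (Yp i)"
proof -
  have "br h (br (Y i) (Y k)) = scale (- \<alpha> i h + - \<alpha> k h) (br (Y i) (Y k))"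
    by (rule wt_br[OF h Ypar[OF i]]) (use rel_Y h i k_in in auto)
  moreover have "scale (- \<alpha> i h + - \<alpha> k h) w = - scale (\<alpha> i h + \<alpha> k h) w" for w
    by (metis minus_add_distrib scale_minus_left)
  ultimately have "br h (br (Y i) (Y k)) = - scale (\<alpha> i h + \<alpha> k h) (br (Y i) (Y k))" by simp
  thus ?thesis using rel_X rel_Y h i k_in by (auto simp: odd_refl_Y_def odd_refl_root_def)
qed

lemma XkXk_z: "br (X k) (br (X k) z) = 0"
  using odd_sq[of "X k" z] Xk1 V1 by simp
lemma YkYk_z: "br (Y k) (br (Y k) z) = 0"
  using odd_sq[of "Y k" z] Yk1 V2 by simp

lemma P4: assumes i: "i \<in> I" and j: "j \<in> I"
  shows "br (Xp i) (Yp j) = (if i = j then odd_refl_h br A X Y k i else 0)"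
proof (cases "i = j")
  case True thus ?thesis by (simp add: odd_refl_h_def)
next
  case ij: False
  have goal: "br (Xp i) (Yp j) = 0"
  proof (cases "i = k")
    case ik: True
    hence jk: "j \<noteq> k" using ij by simp
    show ?thesis
    proof (cases "A j k = 0 \<and> A k j = 0")
      case True
      have "br (Y j) (Y k) = 0" using V4[OF j jk] True by blast
      hence "br (Y k) (Y j) = 0" using antisym[OF Yk1 Ypar[OF j]] by simp
      thus ?thesis using ik jk True by (auto simp: odd_refl_X_def odd_refl_Y_def)
    next
      case False
      have "br (Y k) (br (Y j) (Y k)) = 0"
        unfolding antisym[OF Ypar[OF j] Yk1] by (simp add: br_negR br_scaleR YkYk_z)
      thus ?thesis using ik jk False by (auto simp: odd_refl_X_def odd_refl_Y_def)
    qed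
  next
    case ik: False
    show ?thesis
    proof (cases "j = k")
      case jk: True
      show ?thesis
      proof (cases "A i k = 0 \<and> A k i = 0")
        case True
        thus ?thesis using V3[OF i ik] ik jk by (auto simp: odd_refl_X_def odd_refl_Y_def)
      next
        case False
        have "br (br (X i) (X k)) (X k) = 0"
          unfolding antisym[OF br_par[OF Xpar[OF i] Xk1] Xk1]
          unfolding antisym[OF Xpar[OF i] Xk1] by (simp add: br_negR br_scaleR XkXk_z)
        thus ?thesis using ik jk False by (auto simp: odd_refl_X_def odd_refl_Y_def)
      qed
    next
      case jk: False
      have XiYj: "br (X i) (Y j) = 0" "br (X i) (Y k) = 0" "br (X k) (Y j) = 0"
        using XY[OF i j] XY[OF i k_in] XY[OF k_in j] ij ik jk by auto
      have YjXi: "br (Y j) (X i) = 0" "br (Y j) (X k) = 0"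
        using YX[OF i j] YX[OF k_in j] ij jk by auto
      have A1: "br (br (X i) (X k)) (Y j) = 0"
      proof -
        have "br (Y j) (br (X i) (X k)) = 0"
          unfolding jacobi[OF Ypar[OF j] Xpar[OF i]] using YjXi by (simp add: br_scaleR)
        thus ?thesis unfolding antisym[OF br_par[OF Xpar[OF i] Xk1] Ypar[OF j]] by simp
      qed
      have A2: "br (X i) (br (Y j) (Y k)) = 0"
        unfolding jacobi[OF Xpar[OF i] Ypar[OF j]] using XiYj by (simp add: br_scaleR)
      have A3: "br (br (X i) (X k)) (br (Y j) (Y k)) = 0"
      proof -
        let ?z = "br (Y j) (Y k)"
        have e: "br (br (X i) (X k)) ?z = br (X i) (br (X k) ?z) - scale (psign (p i) True) (br (X k) (br (X i) ?z))"
          using jacobi[OF Xpar[OF i] Xk1, of ?z] by (simp add: algebra_simps)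
        have "br (X k) ?z = br (br (X k) (Y j)) (Y k) + scale (psign True (p j)) (br (Y j) (br (X k) (Y k)))"
          by (rule jacobi[OF Xk1 Ypar[OF j]])
        also have "\<dots> = scale (psign True (p j)) (scale (A k j) (Y j))"
          using XiYj XY[OF k_in k_in] Yh[OF j k_in] by simp
        finally have "br (X i) (br (X k) ?z) = 0"
          using XiYj by (simp add: br_scaleR)
        thus ?thesis unfolding e using A2 by simp
      qed
      show ?thesis using ik jk A1 A2 A3 XiYj
        by (auto simp: odd_refl_X_def odd_refl_Y_def)
    qed
  qed
  thus ?thesis using ij by simp
qed

end


context CGk
begin

lemma P1: "lin_indep_on H n r"
  unfolding lin_indep_on_def
proof (intro allI impI)
  fix c :: "nat \<Rightarrow> complex"
  assume c: "\<forall>x\<in>H. (\<Sum>i=1..n. c i * r i x) = 0"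
  define e where "e i = (if i = k then -1 else if A i k = 0 \<and> A k i = 0 then 0 else (1::complex))" for i
  define D where "D = (\<Sum>j\<in>I. c j * e j)"
  define d where "d i = (if i = k then D else c i)" for i
  have rform: "r i x = (if i = k then 0 else \<alpha> i x) + e i * \<alpha> k x" for i x
    by (simp add: odd_refl_root_def e_def)
  have eq: "(\<Sum>i\<in>I. c i * r i x) = (\<Sum>i\<in>I. d i * \<alpha> i x)" for x
  proof -
    have "(\<Sum>i\<in>I. c i * r i x) = (\<Sum>i\<in>I. (if i = k then 0 else c i * \<alpha> i x) + (c i * e i) * \<alpha> k x)"
      by (rule sum.cong) (auto simp: rform algebra_simps)
    also have "\<dots> = (\<Sum>i\<in>I. (if i = k then 0 else c i * \<alpha> i x)) + D * \<alpha> k x"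
      by (simp add: sum.distrib D_def sum_distrib_right)
    also have "\<dots> = (\<Sum>i\<in>I. (if i = k then 0 else c i * \<alpha> i x) + (if i = k then D * \<alpha> k x else 0))"
      using k_in by (simp add: sum.distrib)
    also have "\<dots> = (\<Sum>i\<in>I. d i * \<alpha> i x)"
      by (rule sum.cong) (auto simp: d_def)
    finally show ?thesis .
  qed
  have "\<forall>x\<in>H. (\<Sum>i=1..n. d i * \<alpha> i x) = 0" using c eq by simp
  hence d0: "\<forall>i\<in>I. d i = 0" using \<alpha>_indep unfolding lin_indep_on_def by blast
  have cne: "c i = 0" if "i \<in> I" "i \<noteq> k" for i using d0[rule_format, OF that(1)] that(2) by (simp add: d_def)
  have "D = (\<Sum>j\<in>I. if j = k then - c k else 0)"
    unfolding D_def by (rule sum.cong) (auto simp: e_def cne)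
  hence "D = - c k" using k_in by simp
  moreover have "D = 0" using d0[rule_format, OF k_in] by (simp add: d_def)
  ultimately have "c k = 0" by simp
  thus "\<forall>i\<in>{1..n}. c i = 0" using cne by blast
qed

lemma P5: assumes reg: "regular_root n A k"
  shows "lie_generated scale br (H \<union> Xp ` I \<union> Yp ` I) = UNIV"
proof -
  let ?G = "lie_generated scale br (H \<union> Xp ` I \<union> Yp ` I)"
  have cl: "lie_closed ?G" by (rule lg_closed)
  have sub: "subspace ?G" and brc: "\<And>x y. x \<in> ?G \<Longrightarrow> y \<in> ?G \<Longrightarrow> br x y \<in> ?G"
    using cl unfolding lie_closed_def by blast+
  have sup: "H \<union> Xp ` I \<union> Yp ` I \<subseteq> ?G" by (rule lg_sup)
  have XpG: "Xp i \<in> ?G" if "i \<in> I" for i using sup that by blast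
  have YpG: "Yp i \<in> ?G" if "i \<in> I" for i using sup that by blast
  have YkG: "Y k \<in> ?G" using XpG[OF k_in] by (simp add: odd_refl_X_def)
  have XkG: "X k \<in> ?G" using YpG[OF k_in] by (simp add: odd_refl_Y_def)
  have XYG: "X i \<in> ?G \<and> Y i \<in> ?G" if i: "i \<in> I" for i
  proof (cases "i = k")
    case True thus ?thesis using XkG YkG by simp
  next
    case ik: False
    show ?thesis
    proof (cases "A i k = 0 \<and> A k i = 0")
      case True thus ?thesis using XpG[OF i] YpG[OF i] ik by (simp add: odd_refl_X_def odd_refl_Y_def)
    next
      case False
      hence Aki: "A k i \<noteq> 0" using reg i ik unfolding regular_root_def by blast
      have bX: "br (X i) (X k) \<in> ?G" using XpG[OF i] ik False by (simp add: odd_refl_X_def)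
      have bY: "br (Y i) (Y k) \<in> ?G" using YpG[OF i] ik False by (simp add: odd_refl_Y_def)
      have "br (X i) (br (X k) (Y k)) = br (br (X i) (X k)) (Y k) + scale (psign (p i) True) (br (X k) (br (X i) (Y k)))"
        by (rule jacobi[OF Xpar[OF i] Xk1])
      hence "br (br (X i) (X k)) (Y k) = - scale (A k i) (X i)"
        using XY[OF k_in k_in] XY[OF i k_in] ik Xh[OF i k_in] by simp
      hence "scale (- inverse (A k i)) (br (br (X i) (X k)) (Y k)) = X i"
        using Aki by simp
      moreover have "br (br (X i) (X k)) (Y k) \<in> ?G" using brc[OF bX YkG] .
      ultimately have X: "X i \<in> ?G" using sub by (metis subspace_scale)
      have "br (Y i) (br (Y k) (X k)) = br (br (Y i) (Y k)) (X k) + scale (psign (p i) True) (br (Y k) (br (Y i) (X k)))"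
        by (rule jacobi[OF Ypar[OF i] Yk1])
      hence "br (br (Y i) (Y k)) (X k) = scale (A k i) (Y i)"
        using YX[OF k_in k_in] YX[OF k_in i] ik Yh[OF i k_in] pk by simp
      hence "scale (inverse (A k i)) (br (br (Y i) (Y k)) (X k)) = Y i"
        using Aki by simp
      moreover have "br (br (Y i) (Y k)) (X k) \<in> ?G" using brc[OF bY XkG] .
      ultimately have Y: "Y i \<in> ?G" using sub by (metis subspace_scale)
      show ?thesis using X Y by blast
    qed
  qed
  have "H \<union> X ` I \<union> Y ` I \<subseteq> ?G" using sup XYG by blast
  hence "lie_generated scale br (H \<union> X ` I \<union> Y ` I) \<subseteq> ?G" using lg_min cl by blast
  thus ?thesis using gen by blast
qed

end

theorem lemma4p1:
  fixes scale :: "complex \<Rightarrow> 'g::ab_group_add \<Rightarrow> 'g"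
    and br :: "'g \<Rightarrow> 'g \<Rightarrow> 'g"
    and G0 G1 H :: "'g set"
    and n k :: nat
    and A :: "nat \<Rightarrow> nat \<Rightarrow> complex"
    and p :: "nat \<Rightarrow> bool"
    and \<alpha> :: "nat \<Rightarrow> 'g \<Rightarrow> complex"
    and hh X Y :: "nat \<Rightarrow> 'g"
  assumes lsa: "lie_superalgebra scale br G0 G1"
    and H_sub: "module.subspace scale H"
    and H_even: "H \<subseteq> G0"
    and H_abel: "\<forall>x\<in>H. \<forall>y\<in>H. br x y = 0"
    and H_dim: "vector_space.dim scale H = n + corank n A"
    and \<alpha>_lin: "\<forall>i\<in>{1..n}. linear_on scale H (\<alpha> i)"
    and \<alpha>_indep: "lin_indep_on H n \<alpha>"
    and hh_in: "\<forall>i\<in>{1..n}. hh i \<in> H"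
    and hh_val: "\<forall>i\<in>{1..n}. \<forall>j\<in>{1..n}. \<alpha> j (hh i) = A i j"
    and X_par: "\<forall>i\<in>{1..n}. X i \<in> par_part G0 G1 (p i)"
    and Y_par: "\<forall>i\<in>{1..n}. Y i \<in> par_part G0 G1 (p i)"
    and rel_X: "\<forall>h\<in>H. \<forall>i\<in>{1..n}. br h (X i) = scale (\<alpha> i h) (X i)"
    and rel_Y: "\<forall>h\<in>H. \<forall>i\<in>{1..n}. br h (Y i) = scale (- \<alpha> i h) (Y i)"
    and rel_XY: "\<forall>i\<in>{1..n}. \<forall>j\<in>{1..n}. br (X i) (Y j) = (if i = j then hh i else 0)"
    and gen: "lie_generated scale br (H \<union> X ` {1..n} \<union> Y ` {1..n}) = UNIV"
    and maximal: "\<forall>J. lie_ideal scale br J \<and> J \<inter> H = {0} \<longrightarrow> J = {0}"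
    and k_in: "k \<in> {1..n}"
    and akk: "A k k = 0"
    and pk: "p k"
  shows "lin_indep_on H n (odd_refl_root A \<alpha> k)
    \<and> (\<forall>h\<in>H. \<forall>i\<in>{1..n}.
          br h (odd_refl_X br A X Y k i) = scale (odd_refl_root A \<alpha> k i h) (odd_refl_X br A X Y k i))
    \<and> (\<forall>h\<in>H. \<forall>i\<in>{1..n}.
          br h (odd_refl_Y br A X Y k i) = scale (- odd_refl_root A \<alpha> k i h) (odd_refl_Y br A X Y k i))
    \<and> (\<forall>i\<in>{1..n}. \<forall>j\<in>{1..n}.
          br (odd_refl_X br A X Y k i) (odd_refl_Y br A X Y k j)
            = (if i = j then odd_refl_h br A X Y k i else 0))
    \<and> (regular_root n A k \<longrightarrow>
          lie_generated scale br
            (H \<union> odd_refl_X br A X Y k ` {1..n} \<union> odd_refl_Y br A X Y k ` {1..n}) = UNIV)"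
proof -
  interpret CGk scale br G0 G1 H n k A p \<alpha> hh X Y
    by unfold_locales (rule assms)+
  show ?thesis
  proof (intro conjI ballI impI)
    show "lin_indep_on H n (odd_refl_root A \<alpha> k)" by (rule P1)
  next
    fix h i assume "h \<in> H" "i \<in> {1..n}"
    thus "br h (odd_refl_X br A X Y k i) = scale (odd_refl_root A \<alpha> k i h) (odd_refl_X br A X Y k i)"
      by (rule P2)
  next
    fix h i assume "h \<in> H" "i \<in> {1..n}"
    thus "br h (odd_refl_Y br A X Y k i) = scale (- odd_refl_root A \<alpha> k i h) (odd_refl_Y br A X Y k i)"
      by (rule P3)
  next
    fix i j assume "i \<in> {1..n}" "j \<in> {1..n}"
    thus "br (odd_refl_X br A X Y k i) (odd_refl_Y br A X Y k j) = (if i = j then odd_refl_h br A X Y k i else 0)"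
      by (rule P4)
  next
    assume "regular_root n A k"
    thus "lie_generated scale br (H \<union> odd_refl_X br A X Y k ` {1..n} \<union> odd_refl_Y br A X Y k ` {1..n}) = UNIV"
      by (rule P5)
  qed
qed

end
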